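(* Let $S$ be the topological space consisting of a convergent sequence of distinct points $s_1, s_2, \dots$ together with its limit $s_0$ (i.e. $S$ is homeomorphic to $\{0\} \cup \{1/k : k \geq 1\} \subset \mathbb{R}$ with the subspace topology). Then the Milnor-Thurston homology groups of $S$ satisfy $\mathcal{H}_n(S) = 0$ for all $n > 0$, and $\mathcal{H}_0(S) \cong \ell^1$ as real vector spaces, where $\ell^1 = \{(a_k)_{k \geq 0} : a_k \in \mathbb{R},\ \sum_{k=0}^\infty |a_k| < \infty\}$.
   Context: Milnor-Thurston (measure) homology: for a topological space $X$ and integer $k \geq 0$, let $C^0(\Delta^k, X)$ be the space of continuous maps from the standard $k$-simplex $\Delta^k$ to $X$ (singular simplices), with the compact-open topology. A (signed) measure is a $\sigma$-additive real-valued set function vanishing on the empty set. A carrier of a Borel measure $\mu$ on $C^0(\Delta^k,X)$ is a set $D$ such that every Borel subset of the complement of $D$ has measure zero. $\mathcal{C}_k(X)$ is the real vector space of finite signed Borel measures on $C^0(\Delta^k,X)$ admitting a compact carrier. For a continuous map $f$ between such spaces, the image measure is $(f\mu)(A) = \mu(f^{-1}(A))$. The boundary $\partial : \mathcal{C}_k(X) \to \mathcal{C}_{k-1}(X)$ is $\partial = \sum_{i=0}^k (-1)^i \partial_i$, where $\partial_i \mu$ is the image measure of $\mu$ under $\sigma \mapsto \sigma \circ \delta_i$, with $\delta_i : \Delta^{k-1} \to \Delta^k$ the standard inclusion of the $i$-th face. $(\mathcal{C}_*(X), \partial)$ is a chain complex and its homology $\mathcal{H}_*(X)$ (real vector spaces)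 is the Milnor-Thurston homology of $X$. *)

theory Defs
  imports "HOL-Analysis.Analysis" "HOL-Homology.Homology"
begin

text \<open>The space of singular k-simplices C^0(Delta^k, X) (library notion singular_simplex,
  maps normalised to be extensional on the standard simplex).\<close>
definition mt_simplices :: "nat \<Rightarrow> 'a topology \<Rightarrow> ((nat \<Rightarrow> real) \<Rightarrow> 'a) set" where
  "mt_simplices k X = {f. singular_simplex k X f}"

definition compact_open_top :: "nat \<Rightarrow> 'a topology \<Rightarrow> ((nat \<Rightarrow> real) \<Rightarrow> 'a) topology" where
  "compact_open_top k X = topology_generated_by
     {{f \<in> mt_simplices k X. f ` K \<subseteq> U} | K U.
        compactin (subtopology (powertop_real UNIV) (standard_simplex k)) K \<and> openin X U}"

definition borel_sets_of :: "'b topology \<Rightarrow> 'b set set" where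
  "borel_sets_of T = sigma_sets (topspace T) {U. openin T U}"

text \<open>We represent it as a function on all sets which is zero
  outside the Borel sets (so that equal measures are equal functions).\<close>
definition finite_signed_borel_measure :: "'b topology \<Rightarrow> ('b set \<Rightarrow> real) \<Rightarrow> bool" where
  "finite_signed_borel_measure T \<mu> \<longleftrightarrow>
     \<mu> {} = 0 \<and>
     (\<forall>A::nat \<Rightarrow> 'b set. range A \<subseteq> borel_sets_of T \<longrightarrow> disjoint_family A \<longrightarrow>
         (\<lambda>n. \<mu> (A n)) sums \<mu> (\<Union>n. A n)) \<and>
     (\<forall>A. A \<notin> borel_sets_of T \<longrightarrow> \<mu> A = 0)"

definition is_carrier :: "'b topology \<Rightarrow> ('b set \<Rightarrow> real) \<Rightarrow> 'b set \<Rightarrow> bool" where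
  "is_carrier T \<mu> D \<longleftrightarrow> (\<forall>B \<in> borel_sets_of T. B \<subseteq> topspace T - D \<longrightarrow> \<mu> B = 0)"

definition mt_chains :: "'a topology \<Rightarrow> nat \<Rightarrow> (((nat \<Rightarrow> real) \<Rightarrow> 'a) set \<Rightarrow> real) set" where
  "mt_chains X k = {\<mu>. finite_signed_borel_measure (compact_open_top k X) \<mu> \<and>
       (\<exists>D. compactin (compact_open_top k X) D \<and> is_carrier (compact_open_top k X) \<mu> D)}"

definition mt_face :: "'a topology \<Rightarrow> nat \<Rightarrow> nat \<Rightarrow> (((nat \<Rightarrow> real) \<Rightarrow> 'a) set \<Rightarrow> real)
    \<Rightarrow> (((nat \<Rightarrow> real) \<Rightarrow> 'a) set \<Rightarrow> real)" where
  "mt_face X k i \<mu> = (\<lambda>A. if A \<in> borel_sets_of (compact_open_top (k - 1) X)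
      then \<mu> {\<sigma> \<in> mt_simplices k X. singular_face k i \<sigma> \<in> A} else 0)"

definition mt_boundary :: "'a topology \<Rightarrow> nat \<Rightarrow> (((nat \<Rightarrow> real) \<Rightarrow> 'a) set \<Rightarrow> real)
    \<Rightarrow> (((nat \<Rightarrow> real) \<Rightarrow> 'a) set \<Rightarrow> real)" where
  "mt_boundary X k \<mu> = (if k = 0 then (\<lambda>A. 0)
      else (\<lambda>A. \<Sum>i\<le>k. (-1) ^ i * mt_face X k i \<mu> A))"

definition mt_cycles :: "'a topology \<Rightarrow> nat \<Rightarrow> (((nat \<Rightarrow> real) \<Rightarrow> 'a) set \<Rightarrow> real) set" where
  "mt_cycles X k = {\<mu> \<in> mt_chains X k. mt_boundary X k \<mu> = (\<lambda>A. 0)}"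

definition mt_boundaries :: "'a topology \<Rightarrow> nat \<Rightarrow> (((nat \<Rightarrow> real) \<Rightarrow> 'a) set \<Rightarrow> real) set" where
  "mt_boundaries X k = mt_boundary X (Suc k) ` mt_chains X (Suc k)"

definition mt_class :: "'a topology \<Rightarrow> nat \<Rightarrow> (((nat \<Rightarrow> real) \<Rightarrow> 'a) set \<Rightarrow> real)
    \<Rightarrow> (((nat \<Rightarrow> real) \<Rightarrow> 'a) set \<Rightarrow> real) set" where
  "mt_class X k z = {(\<lambda>A. z A + b A) | b. b \<in> mt_boundaries X k}"

text \<open>Milnor-Thurston homology \<H>_k(X) = Z_k(X) / B_k(X), as the set of cosets;
  its vector space operations are induced by those on cycles.\<close>
definition mt_homology :: "'a topology \<Rightarrow> nat \<Rightarrow> (((nat \<Rightarrow> real) \<Rightarrow> 'a) set \<Rightarrow> real) set set" where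
  "mt_homology X k = mt_class X k ` mt_cycles X k"

definition ell1 :: "(nat \<Rightarrow> real) set" where
  "ell1 = {a. summable (\<lambda>k. \<bar>a k\<bar>)}"

definition conv_seq_space :: "real topology" where
  "conv_seq_space = top_of_set ({0} \<union> {1 / real k | k. k \<ge> 1})"

end

theory Submission
  imports Defs
begin


definition SS :: "real set" where "SS = {0} \<union> {1 / real k | k. k \<ge> 1}"
definition sq :: "nat \<Rightarrow> real" where "sq k = (if k = 0 then 0 else 1 / real k)"
definition cs :: "nat \<Rightarrow> real \<Rightarrow> (nat \<Rightarrow> real) \<Rightarrow> real" where
  "cs k p = (\<lambda>x. if x \<in> standard_simplex k then p else undefined)"
definition e0 :: "nat \<Rightarrow> real" where "e0 = (\<lambda>j. if j = 0 then 1 else 0)"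

lemma e0_in: "e0 \<in> standard_simplex k"
  by (auto simp: standard_simplex_def e0_def)

lemma cs_e0[simp]: "cs k p e0 = p" by (simp add: cs_def e0_in)

lemma topX: "topspace conv_seq_space = SS"
  by (simp add: conv_seq_space_def SS_def)

lemma range_sq: "range sq = SS"
proof
  show "range sq \<subseteq> SS" unfolding SS_def sq_def by auto
  show "SS \<subseteq> range sq"
  proof
    fix x assume "x \<in> SS"
    then consider "x = 0" | k where "k \<ge> 1" "x = 1 / real k" unfolding SS_def by blast
    then show "x \<in> range sq"
    proof cases
      case 1 then have "sq 0 = x" by (simp add: sq_def)
      then show ?thesis by blast
    next
      case 2 then have "sq k = x" by (simp add: sq_def)
      then show ?thesis by blast
    qed
  qed
qed

lemma inj_sq: "inj sq"
  unfolding inj_def sq_def by (auto split: if_splits)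

lemma countable_SS: "countable SS" unfolding range_sq[symmetric] by simp

lemma compact_SS: "compact SS"
proof -
  have eq: "SS = insert 0 (range (\<lambda>n. 1 / real (Suc n)))"
  proof
    show "SS \<subseteq> insert 0 (range (\<lambda>n. 1 / real (Suc n)))"
    proof
      fix x assume "x \<in> SS"
      then consider "x = 0" | k where "k \<ge> 1" "x = 1 / real k" unfolding SS_def by blast
      then show "x \<in> insert 0 (range (\<lambda>n. 1 / real (Suc n)))"
      proof cases
        case 2
        then have "x = 1 / real (Suc (k - 1))" by simp
        then show ?thesis by blast
      qed simp
    qed
    show "insert 0 (range (\<lambda>n. 1 / real (Suc n))) \<subseteq> SS"
      unfolding SS_def by (auto intro!: exI[where x="Suc _"])
  qed
  moreover have "(\<lambda>n. 1 / real (Suc n)) \<longlonglongrightarrow> 0" by (rule LIMSEQ_Suc) (rule lim_const_over_n)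
  then have "compact (insert 0 (range (\<lambda>n. 1 / real (Suc n))))" by (rule compact_sequence_with_limit)
  ultimately show ?thesis by (simp only:)
qed

lemma simp_cs: "p \<in> SS \<Longrightarrow> singular_simplex k conv_seq_space (cs k p)"
  unfolding singular_simplex_def
proof
  assume p: "p \<in> SS"
  show "continuous_map (subtopology (powertop_real UNIV) (standard_simplex k)) conv_seq_space (cs k p)"
    by (rule continuous_map_eq[where f="\<lambda>x. p"]) (auto simp: cs_def topX p)
  show "cs k p \<in> extensional (standard_simplex k)" by (simp add: cs_def extensional_def)
qed

lemma simp_const:
  assumes "singular_simplex k conv_seq_space f"
  shows "\<exists>p\<in>SS. f = cs k p"
proof -
  have c: "continuous_map (subtopology (powertop_real UNIV) (standard_simplex k)) conv_seq_space f"
   and e: "f \<in> extensional (standard_simplex k)" using assms by (auto simp: singular_simplex_def)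
  have "connectedin (subtopology (powertop_real UNIV) (standard_simplex k)) (standard_simplex k)"
    by (simp add: connectedin_subtopology connectedin_standard_simplex)
  then have "connectedin conv_seq_space (f ` standard_simplex k)"
    using c connectedin_continuous_map_image by blast
  then have con: "connected (f ` standard_simplex k)" and sub: "f ` standard_simplex k \<subseteq> SS"
    by (auto simp: conv_seq_space_def connectedin_subtopology SS_def)
  have fe: "f e0 \<in> SS" using sub e0_in by blast
  have "\<forall>x \<in> standard_simplex k. f x = f e0"
  proof (rule ccontr)
    assume "\<not> ?thesis"
    then obtain x where x: "x \<in> standard_simplex k" "f x \<noteq> f e0" by blast
    then have "uncountable (f ` standard_simplex k)"
      using connected_uncountable[OF con, of "f x" "f e0"] e0_in by blast
    moreover have "countable (f ` standard_simplex k)" using sub countable_SS countable_subset by blast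
    ultimately show False by blast
  qed
  then have "f = cs k (f e0)" using e unfolding cs_def extensional_def by auto
  then show ?thesis using fe by blast
qed

lemma P_eq: "mt_simplices k conv_seq_space = cs k ` SS"
  unfolding mt_simplices_def using simp_cs simp_const by blast

lemma cs_inj: "cs k p = cs k q \<Longrightarrow> p = q" using cs_e0 by metis

lemma face_cs: assumes "1 \<le> k" "i \<le> k" shows "singular_face k i (cs k p) = cs (k - 1) p"
  unfolding singular_face_def cs_def
  using simplical_face_in_standard_simplex[OF assms] by (auto simp: fun_eq_iff)




abbreviation "TT k \<equiv> compact_open_top k conv_seq_space"
abbreviation "PP k \<equiv> mt_simplices k conv_seq_space"

lemma csP: "p \<in> SS \<Longrightarrow> cs k p \<in> PP k" by (simp add: P_eq)

lemma cs_image: "K \<subseteq> standard_simplex k \<Longrightarrow> K \<noteq> {} \<Longrightarrow> cs k p ` K = {p}"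
  by (auto simp: cs_def)

lemma cpt_simplex: "compactin (subtopology (powertop_real UNIV) (standard_simplex k)) (standard_simplex k)"
  by (simp add: compactin_subtopology compactin_standard_simplex)

lemma topT: "topspace (TT k) = PP k"
proof -
  have "PP k \<subseteq> {f \<in> PP k. f ` standard_simplex k \<subseteq> topspace conv_seq_space}"
    using cs_image[OF order_refl] e0_in by (auto simp: P_eq topX cs_def)
  moreover have "openin conv_seq_space (topspace conv_seq_space)" by simp
  ultimately show ?thesis unfolding compact_open_top_def topology_generated_by_topspace
    using cpt_simplex by blast
qed

lemma cont_cs: "continuous_map conv_seq_space (TT k) (cs k)"
  unfolding compact_open_top_def
proof (rule continuous_on_generated_topo)
  fix U assume "U \<in> {{f \<in> PP k. f ` K \<subseteq> V} | K V.
        compactin (subtopology (powertop_real UNIV) (standard_simplex k)) K \<and> openin conv_seq_space V}"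
  then obtain K V where U: "U = {f \<in> PP k. f ` K \<subseteq> V}"
     and K: "compactin (subtopology (powertop_real UNIV) (standard_simplex k)) K"
     and V: "openin conv_seq_space V" by blast
  have Ks: "K \<subseteq> standard_simplex k" using K by (simp add: compactin_subtopology)
  have Vs: "V \<subseteq> SS" using openin_subset[OF V] topX by simp
  show "openin conv_seq_space (cs k -` U \<inter> topspace conv_seq_space)"
  proof (cases "K = {}")
    case True
    then have "cs k -` U \<inter> topspace conv_seq_space = topspace conv_seq_space"
      using U csP topX by auto
    then show ?thesis by simp
  next
    case False
    then have "cs k -` U \<inter> topspace conv_seq_space = V"
      using U csP topX cs_image[OF Ks False] Vs by auto
    then show ?thesis using V by simp
  qed
next
  show "cs k ` topspace conv_seq_space \<subseteq> \<Union> {{f \<in> PP k. f ` K \<subseteq> V} | K V.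
        compactin (subtopology (powertop_real UNIV) (standard_simplex k)) K \<and> openin conv_seq_space V}"
    using topT[of k] unfolding compact_open_top_def topology_generated_by_topspace
    by (simp add: P_eq topX)
qed

lemma compactP: "compactin (TT k) (PP k)"
proof -
  have "compactin conv_seq_space SS"
    unfolding conv_seq_space_def SS_def using compact_SS[unfolded SS_def]
    by (simp add: compactin_subtopology)
  then show ?thesis using image_compactin[OF _ cont_cs] by (simp add: P_eq)
qed

lemma open_sub: "{U. openin (TT k) U} \<subseteq> Pow (topspace (TT k))"
  using openin_subset by auto

lemma single_borel:
  assumes p: "p \<in> SS" shows "{cs k p} \<in> borel_sets_of (TT k)"
proof -
  define Op where "Op n = {f \<in> PP k. f ` standard_simplex k \<subseteq> SS \<inter> ball p (1 / real (Suc n))}" for n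
  have "openin conv_seq_space (SS \<inter> ball p r)" for r
    unfolding conv_seq_space_def SS_def by (simp add: openin_open_Int)
  then have "openin (TT k) (Op n)" for n
    unfolding Op_def compact_open_top_def
    by (intro topology_generated_by_Basis) (use cpt_simplex in blast)
  then have "(\<Inter>n. Op n) \<in> borel_sets_of (TT k)"
    unfolding borel_sets_of_def
    by (intro sigma_sets_Inter[OF open_sub]) (auto intro: sigma_sets.Basic)
  moreover have "(\<Inter>n. Op n) = {cs k p}"
  proof
    show "{cs k p} \<subseteq> (\<Inter>n. Op n)" using cs_image[OF order_refl] e0_in p csP
      by (auto simp: Op_def cs_def)
    show "(\<Inter>n. Op n) \<subseteq> {cs k p}"
    proof
      fix f assume f: "f \<in> (\<Inter>n. Op n)"
      then have "f \<in> PP k" by (auto simp: Op_def)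
      then obtain q where q: "q \<in> SS" "f = cs k q" by (auto simp: P_eq)
      have img: "cs k q ` standard_simplex k = {q}" using cs_image[OF order_refl] e0_in by blast
      have "q \<in> ball p (1 / real (Suc n))" for n
        using f q img by (auto simp: Op_def)
      then have "dist p q < 1 / real (Suc n)" for n by simp
      then have "q = p"
      proof -
        assume d: "\<And>n. dist p q < 1 / real (Suc n)"
        show "q = p"
        proof (rule ccontr)
          assume "q \<noteq> p"
          then have "0 < dist p q" by simp
          then obtain n where "inverse (real (Suc n)) < dist p q" using reals_Archimedean by blast
          then show False using d[of n] by (simp add: inverse_eq_divide)
        qed
      qed
      then show "f \<in> {cs k p}" using q by simp
    qed
  qed
  ultimately show ?thesis by simp
qed

lemma borelT: "borel_sets_of (TT k) = Pow (PP k)"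
proof
  show "borel_sets_of (TT k) \<subseteq> Pow (PP k)"
    unfolding borel_sets_of_def using sigma_sets_into_sp[OF open_sub] topT by blast
  show "Pow (PP k) \<subseteq> borel_sets_of (TT k)"
  proof
    fix A assume A: "A \<in> Pow (PP k)"
    define B where "B n = (if cs k (sq n) \<in> A then {cs k (sq n)} else {})" for n
    have "B n \<in> borel_sets_of (TT k)" for n
      unfolding B_def using single_borel[of "sq n" k] range_sq
      by (auto simp: borel_sets_of_def intro: sigma_sets.Empty)
    then have "(\<Union>n. B n) \<in> borel_sets_of (TT k)"
      unfolding borel_sets_of_def by (rule sigma_sets.Union)
    moreover have "(\<Union>n. B n) = A"
    proof
      show "(\<Union>n. B n) \<subseteq> A" unfolding B_def by (auto split: if_splits)
      show "A \<subseteq> (\<Union>n. B n)"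
      proof
        fix x assume "x \<in> A"
        moreover then obtain q where "q \<in> SS" "x = cs k q" using A by (auto simp: P_eq)
        moreover have "q \<in> range sq" using range_sq \<open>q \<in> SS\<close> by simp
        moreover then obtain n where "q = sq n" by blast
        ultimately show "x \<in> (\<Union>n. B n)" unfolding B_def by auto
      qed
    qed
    ultimately show "A \<in> borel_sets_of (TT k)" by simp
  qed
qed




abbreviation "FSM k \<equiv> finite_signed_borel_measure (TT k)"

lemma P_repr: "\<tau> \<in> PP k \<Longrightarrow> \<tau> = cs k (\<tau> e0) \<and> \<tau> e0 \<in> SS"
  by (auto simp: P_eq)

lemma faceP: "\<sigma> \<in> PP k \<Longrightarrow> 1 \<le> k \<Longrightarrow> i \<le> k \<Longrightarrow> singular_face k i \<sigma> = cs (k - 1) (\<sigma> e0)"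
proof -
  assume s: "\<sigma> \<in> PP k" and k: "1 \<le> k" "i \<le> k"
  then obtain p where "\<sigma> = cs k p" by (auto simp: P_eq)
  then show ?thesis using face_cs[OF k] by simp
qed

lemma mt_face_eq: "1 \<le> k \<Longrightarrow> i \<le> k \<Longrightarrow> mt_face conv_seq_space k i \<mu> = mt_face conv_seq_space k 0 \<mu>"
proof -
  assume k: "1 \<le> k" "i \<le> k"
  have h: "{\<sigma> \<in> PP k. singular_face k i \<sigma> \<in> A} = {\<sigma> \<in> PP k. singular_face k 0 \<sigma> \<in> A}" for A
    using faceP[OF _ k] faceP[OF _ k(1), of _ 0] by auto
  show ?thesis unfolding mt_face_def by (rule ext) (subst h, rule refl)
qed

lemma altsum: "(\<Sum>i\<le>k. (-1::real) ^ i) = (if even k then 1 else 0)"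
  by (induction k) auto

lemma bdry: "1 \<le> k \<Longrightarrow> mt_boundary conv_seq_space k \<mu> =
   (\<lambda>A. (if even k then 1 else 0) * mt_face conv_seq_space k 0 \<mu> A)"
proof -
  assume k: "1 \<le> k"
  have "(\<Sum>i\<le>k. (-1) ^ i * mt_face conv_seq_space k i \<mu> A) = (\<Sum>i\<le>k. (-1::real) ^ i) * mt_face conv_seq_space k 0 \<mu> A" for A
  proof -
    have "(\<Sum>i\<le>k. (-1) ^ i * mt_face conv_seq_space k i \<mu> A) = (\<Sum>i\<le>k. (-1::real) ^ i * mt_face conv_seq_space k 0 \<mu> A)"
    proof (rule sum.cong)
      fix i assume "i \<in> {..k}"
      then have "mt_face conv_seq_space k i \<mu> = mt_face conv_seq_space k 0 \<mu>" by (intro mt_face_eq[OF k]) simp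
      then show "(-1) ^ i * mt_face conv_seq_space k i \<mu> A = (-1::real) ^ i * mt_face conv_seq_space k 0 \<mu> A" by simp
    qed simp
    then show ?thesis by (simp add: sum_distrib_right)
  qed
  then show ?thesis using k unfolding mt_boundary_def by (simp add: altsum)
qed

lemma borel_Union: "range A \<subseteq> borel_sets_of (TT k) \<Longrightarrow> (\<Union>m. A m) \<in> borel_sets_of (TT k)"
  by (auto simp: borelT)

lemma zero_chain: "(\<lambda>A. 0) \<in> mt_chains conv_seq_space k"
  unfolding mt_chains_def finite_signed_borel_measure_def is_carrier_def
  by (auto intro!: exI[of _ "{}"])

lemma add_chain:
  assumes "\<mu> \<in> mt_chains conv_seq_space k" "\<nu> \<in> mt_chains conv_seq_space k"
  shows "(\<lambda>A. \<mu> A + \<nu> A) \<in> mt_chains conv_seq_space k"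
proof -
  obtain D1 D2 where D: "compactin (TT k) D1" "is_carrier (TT k) \<mu> D1"
     "compactin (TT k) D2" "is_carrier (TT k) \<nu> D2"
    and F: "FSM k \<mu>" "FSM k \<nu>" using assms unfolding mt_chains_def by blast
  have "FSM k (\<lambda>A. \<mu> A + \<nu> A)" using F unfolding finite_signed_borel_measure_def
    by (auto intro: sums_add)
  moreover have "compactin (TT k) (D1 \<union> D2)" using D by (simp add: compactin_Un)
  moreover have "is_carrier (TT k) (\<lambda>A. \<mu> A + \<nu> A) (D1 \<union> D2)"
    unfolding is_carrier_def
  proof (intro ballI impI)
    fix B assume B: "B \<in> borel_sets_of (TT k)" "B \<subseteq> topspace (TT k) - (D1 \<union> D2)"
    then have "B \<subseteq> topspace (TT k) - D1" "B \<subseteq> topspace (TT k) - D2" by auto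
    then show "\<mu> B + \<nu> B = 0" using D(2,4) B(1) unfolding is_carrier_def by simp
  qed
  ultimately show ?thesis unfolding mt_chains_def by blast
qed

lemma diff_chain:
  assumes "\<mu> \<in> mt_chains conv_seq_space k" "\<nu> \<in> mt_chains conv_seq_space k"
  shows "(\<lambda>A. \<mu> A - \<nu> A) \<in> mt_chains conv_seq_space k"
proof -
  obtain D1 D2 where D: "compactin (TT k) D1" "is_carrier (TT k) \<mu> D1"
     "compactin (TT k) D2" "is_carrier (TT k) \<nu> D2"
    and F: "FSM k \<mu>" "FSM k \<nu>" using assms unfolding mt_chains_def by blast
  have "FSM k (\<lambda>A. \<mu> A - \<nu> A)" using F unfolding finite_signed_borel_measure_def
    by (auto intro: sums_diff)
  moreover have "compactin (TT k) (D1 \<union> D2)" using D by (simp add: compactin_Un)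
  moreover have "is_carrier (TT k) (\<lambda>A. \<mu> A - \<nu> A) (D1 \<union> D2)"
    unfolding is_carrier_def
  proof (intro ballI impI)
    fix B assume B: "B \<in> borel_sets_of (TT k)" "B \<subseteq> topspace (TT k) - (D1 \<union> D2)"
    then have "B \<subseteq> topspace (TT k) - D1" "B \<subseteq> topspace (TT k) - D2" by auto
    then show "\<mu> B - \<nu> B = 0" using D(2,4) B(1) unfolding is_carrier_def by simp
  qed
  ultimately show ?thesis unfolding mt_chains_def by blast
qed

lemma chain_carrier: "FSM k \<mu> \<Longrightarrow> \<mu> \<in> mt_chains conv_seq_space k"
proof -
  assume F: "FSM k \<mu>"
  have "is_carrier (TT k) \<mu> (PP k)"
    unfolding is_carrier_def
  proof (intro ballI impI)
    fix B assume "B \<subseteq> topspace (TT k) - PP k"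
    then have "B = {}" using topT by auto
    then show "\<mu> B = 0" using F by (simp add: finite_signed_borel_measure_def)
  qed
  then show ?thesis using F compactP unfolding mt_chains_def by blast
qed

definition lift :: "nat \<Rightarrow> (((nat \<Rightarrow> real) \<Rightarrow> real) set \<Rightarrow> real) \<Rightarrow> (((nat \<Rightarrow> real) \<Rightarrow> real) set \<Rightarrow> real)" where
  "lift n z = (\<lambda>A. if A \<in> borel_sets_of (TT (Suc n)) then z {\<tau> \<in> PP n. cs (Suc n) (\<tau> e0) \<in> A} else 0)"

lemma lift_chain:
  assumes z: "z \<in> mt_chains conv_seq_space n"
  shows "lift n z \<in> mt_chains conv_seq_space (Suc n)"
proof (rule chain_carrier)
  have F: "FSM n z" using z by (simp add: mt_chains_def)
  show "FSM (Suc n) (lift n z)"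
    unfolding finite_signed_borel_measure_def
  proof (intro conjI allI impI)
    show "lift n z {} = 0" using F by (simp add: lift_def finite_signed_borel_measure_def borelT)
    show "lift n z A = 0" if "A \<notin> borel_sets_of (TT (Suc n))" for A
      using that by (simp add: lift_def)
    fix A :: "nat \<Rightarrow> _"
    assume A: "range A \<subseteq> borel_sets_of (TT (Suc n))" "disjoint_family A"
    define B where "B m = {\<tau> \<in> PP n. cs (Suc n) (\<tau> e0) \<in> A m}" for m
    have "range B \<subseteq> borel_sets_of (TT n)" by (auto simp: B_def borelT)
    moreover have "disjoint_family B" using A(2) unfolding disjoint_family_on_def B_def by blast
    ultimately have "(\<lambda>m. z (B m)) sums z (\<Union>m. B m)"
      using F unfolding finite_signed_borel_measure_def by blast
    moreover have "lift n z (A m) = z (B m)" for m using A(1) by (auto simp: lift_def B_def)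
    moreover have "lift n z (\<Union>m. A m) = z (\<Union>m. B m)"
      using borel_Union[OF A(1)] by (auto simp: lift_def B_def intro!: arg_cong[where f=z])
    ultimately show "(\<lambda>m. lift n z (A m)) sums lift n z (\<Union>m. A m)" by simp
  qed
qed

lemma face_lift:
  assumes z: "z \<in> mt_chains conv_seq_space n"
  shows "mt_face conv_seq_space (Suc n) 0 (lift n z) = z"
proof
  fix A
  have F: "FSM n z" using z by (simp add: mt_chains_def)
  show "mt_face conv_seq_space (Suc n) 0 (lift n z) A = z A"
  proof (cases "A \<in> borel_sets_of (TT n)")
    case True
    then have As: "A \<subseteq> PP n" by (simp add: borelT)
    have "{\<tau> \<in> PP n. cs (Suc n) (\<tau> e0) \<in> {\<sigma> \<in> PP (Suc n). singular_face (Suc n) 0 \<sigma> \<in> A}} = A"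
    proof -
      have "cs (Suc n) (\<tau> e0) \<in> PP (Suc n) \<and> singular_face (Suc n) 0 (cs (Suc n) (\<tau> e0)) = \<tau>"
        if "\<tau> \<in> PP n" for \<tau>
        using P_repr[OF that] face_cs[of "Suc n" 0] csP by auto
      then show ?thesis using As by auto
    qed
    then show ?thesis using True by (simp add: mt_face_def lift_def borelT)
  next
    case False
    then show ?thesis using F by (simp add: mt_face_def finite_signed_borel_measure_def)
  qed
qed

lemma face_zero_imp:
  assumes k: "1 \<le> k" and mu: "\<mu> \<in> mt_chains conv_seq_space k"
    and f: "mt_face conv_seq_space k 0 \<mu> = (\<lambda>A. 0)"
  shows "\<mu> = (\<lambda>A. 0)"
proof
  fix A'
  have F: "FSM k \<mu>" using mu by (simp add: mt_chains_def)
  show "\<mu> A' = 0"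
  proof (cases "A' \<in> borel_sets_of (TT k)")
    case False then show ?thesis using F by (simp add: finite_signed_borel_measure_def)
  next
    case True
    then have As: "A' \<subseteq> PP k" by (simp add: borelT)
    define A where "A = (\<lambda>\<sigma>. cs (k - 1) (\<sigma> e0)) ` A'"
    have AB: "A \<in> borel_sets_of (TT (k - 1))"
      using As P_repr csP unfolding A_def borelT by blast
    have "{\<sigma> \<in> PP k. singular_face k 0 \<sigma> \<in> A} = A'"
    proof
      show "A' \<subseteq> {\<sigma> \<in> PP k. singular_face k 0 \<sigma> \<in> A}"
        using As faceP[OF _ k, of _ 0] unfolding A_def by auto
      show "{\<sigma> \<in> PP k. singular_face k 0 \<sigma> \<in> A} \<subseteq> A'"
      proof clarify
        fix \<sigma> assume s: "\<sigma> \<in> PP k" "singular_face k 0 \<sigma> \<in> A"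
        then obtain \<sigma>' where s': "\<sigma>' \<in> A'" "cs (k - 1) (\<sigma> e0) = cs (k - 1) (\<sigma>' e0)"
          using faceP[OF _ k, of _ 0] unfolding A_def by auto
        have "\<sigma> e0 = \<sigma>' e0" using s'(2) by (rule cs_inj)
        then have "\<sigma> = \<sigma>'" using P_repr[OF s(1)] P_repr[of \<sigma>'] s'(1) As by auto
        then show "\<sigma> \<in> A'" using s' by simp
      qed
    qed
    then have "mt_face conv_seq_space k 0 \<mu> A = \<mu> A'" using AB by (simp add: mt_face_def)
    then show ?thesis using fun_cong[OF f, of A] by simp
  qed
qed




lemma nonneg_meas:
  fixes f :: "nat \<Rightarrow> real"
  assumes f0: "\<And>n. f n \<ge> 0" and sf: "summable f"
  shows "measure (density (count_space UNIV) (\<lambda>n. ennreal (f n))) J = (suminf (\<lambda>n. f n * indicator J n))"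
    and "emeasure (density (count_space UNIV) (\<lambda>n. ennreal (f n))) J \<noteq> \<infinity>"
proof -
  have sg: "summable (\<lambda>n. f n * indicator J n)"
    by (rule summable_comparison_test[OF _ sf]) (auto simp: indicator_def f0)
  have g0: "\<And>n. 0 \<le> f n * indicator J n" using f0 by (simp add: indicator_def)
  have "emeasure (density (count_space UNIV) (\<lambda>n. ennreal (f n))) J
      = (\<integral>\<^sup>+ x. ennreal (f x) * indicator J x \<partial>count_space UNIV)"
    by (rule emeasure_density) auto
  also have "\<dots> = (suminf (\<lambda>n. ennreal (f n) * indicator J n))" by (rule nn_integral_count_space_nat)
  also have "\<dots> = (suminf (\<lambda>n. ennreal (f n * indicator J n)))"
    by (intro suminf_cong) (auto simp: indicator_def)
  also have "\<dots> = ennreal (suminf (\<lambda>n. f n * indicator J n))" by (rule suminf_ennreal2[OF g0 sg])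
  finally have e: "emeasure (density (count_space UNIV) (\<lambda>n. ennreal (f n))) J = ennreal (suminf (\<lambda>n. f n * indicator J n))" .
  then show "emeasure (density (count_space UNIV) (\<lambda>n. ennreal (f n))) J \<noteq> \<infinity>" by simp
  show "measure (density (count_space UNIV) (\<lambda>n. ennreal (f n))) J = (suminf (\<lambda>n. f n * indicator J n))"
    using e g0 sg by (simp add: measure_def suminf_nonneg)
qed

lemma nonneg_sums:
  fixes f :: "nat \<Rightarrow> real"
  assumes f0: "\<And>n. f n \<ge> 0" and sf: "summable f" and d: "disjoint_family I"
  shows "(\<lambda>m. suminf (\<lambda>n. f n * indicator (I m) n)) sums suminf (\<lambda>n. f n * indicator (\<Union>m. I m) n)"
proof -
  let ?M = "density (count_space UNIV) (\<lambda>n. ennreal (f n))"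
  have "(\<lambda>m. measure ?M (I m)) sums measure ?M (\<Union>m. I m)"
    using nonneg_meas(2)[OF f0 sf, of "\<Union>m. I m"] by (intro measure_UNION) (auto simp: d)
  then show ?thesis by (simp add: nonneg_meas(1)[OF f0 sf])
qed

lemma single_sum: "(suminf (\<lambda>n. f n * indicator {k} n)) = (f k :: real)"
proof -
  have "(\<lambda>n. f n * indicator {k} n) = (\<lambda>r. if r = k then f r else 0)"
    by (auto simp: indicator_def fun_eq_iff)
  then have "(\<lambda>n. f n * indicator {k} n) sums f k" using sums_single[of k f] by simp
  then show ?thesis by (simp add: sums_iff)
qed

lemma inj_css: "cs k (sq m) = cs k (sq n) \<Longrightarrow> m = n"
proof -
  assume "cs k (sq m) = cs k (sq n)"
  then have "sq m = sq n" by (rule cs_inj)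
  then show "m = n" using inj_sq by (simp add: inj_eq)
qed

lemma sqSS: "sq n \<in> SS" using range_sq by blast

lemma decomp:
  assumes F: "FSM k \<mu>" and A: "A \<subseteq> PP k"
  shows "(\<lambda>n. if cs k (sq n) \<in> A then \<mu> {cs k (sq n)} else 0) sums \<mu> A"
proof -
  define B where "B n = (if cs k (sq n) \<in> A then {cs k (sq n)} else {})" for n
  have "range B \<subseteq> borel_sets_of (TT k)" using A csP sqSS by (auto simp: B_def borelT)
  moreover have "disjoint_family B" unfolding disjoint_family_on_def B_def using inj_css by auto
  ultimately have "(\<lambda>n. \<mu> (B n)) sums \<mu> (\<Union>n. B n)"
    using F unfolding finite_signed_borel_measure_def by blast
  moreover have "(\<Union>n. B n) = A"
  proof
    show "(\<Union>n. B n) \<subseteq> A" unfolding B_def by (auto split: if_splits)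
    show "A \<subseteq> (\<Union>n. B n)"
    proof
      fix x assume "x \<in> A"
      moreover then obtain q where "q \<in> SS" "x = cs k q" using A by (auto simp: P_eq)
      moreover have "q \<in> range sq" using range_sq \<open>q \<in> SS\<close> by simp
      moreover then obtain n where "q = sq n" by blast
      ultimately show "x \<in> (\<Union>n. B n)" unfolding B_def by auto
    qed
  qed
  moreover have "\<mu> (B n) = (if cs k (sq n) \<in> A then \<mu> {cs k (sq n)} else 0)" for n
    using F by (simp add: B_def finite_signed_borel_measure_def)
  ultimately show ?thesis by simp
qed

lemma meas_eq:
  assumes "FSM k \<mu>" "FSM k \<nu>" "\<And>n. \<mu> {cs k (sq n)} = \<nu> {cs k (sq n)}"
  shows "\<mu> = \<nu>"
proof
  fix A show "\<mu> A = \<nu> A"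
  proof (cases "A \<in> borel_sets_of (TT k)")
    case True
    then have "A \<subseteq> PP k" by (simp add: borelT)
    have s1: "(\<lambda>n. if cs k (sq n) \<in> A then \<mu> {cs k (sq n)} else 0) sums \<mu> A" using decomp[OF assms(1) \<open>A \<subseteq> PP k\<close>] .
    have s2: "(\<lambda>n. if cs k (sq n) \<in> A then \<nu> {cs k (sq n)} else 0) sums \<nu> A" using decomp[OF assms(2) \<open>A \<subseteq> PP k\<close>] .
    have "(\<lambda>n. if cs k (sq n) \<in> A then \<nu> {cs k (sq n)} else 0) = (\<lambda>n. if cs k (sq n) \<in> A then \<mu> {cs k (sq n)} else 0)"
      by (rule ext) (simp only: assms(3))
    with s2 have "(\<lambda>n. if cs k (sq n) \<in> A then \<mu> {cs k (sq n)} else 0) sums \<nu> A" by simp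
    then show ?thesis using s1 sums_unique2 by blast
  next
    case False then show ?thesis using assms(1,2) by (simp add: finite_signed_borel_measure_def)
  qed
qed

lemma meas_ell1:
  assumes F: "FSM k \<mu>"
  shows "(\<lambda>n. \<mu> {cs k (sq n)}) \<in> ell1"
proof -
  define a where "a n = \<mu> {cs k (sq n)}" for n
  have s1: "summable (\<lambda>n. if 0 < a n then a n else 0)"
  proof -
    have "{cs k (sq n) | n. 0 < a n} \<subseteq> PP k" using csP sqSS by auto
    from decomp[OF F this] have "summable (\<lambda>n. if cs k (sq n) \<in> {cs k (sq n) | n. 0 < a n} then a n else 0)"
      unfolding a_def by (rule sums_summable)
    moreover have "(cs k (sq n) \<in> {cs k (sq n) | n. 0 < a n}) = (0 < a n)" for n using inj_css by blast
    ultimately show ?thesis by simp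
  qed
  have s2: "summable (\<lambda>n. if a n < 0 then a n else 0)"
  proof -
    have "{cs k (sq n) | n. a n < 0} \<subseteq> PP k" using csP sqSS by auto
    from decomp[OF F this] have "summable (\<lambda>n. if cs k (sq n) \<in> {cs k (sq n) | n. a n < 0} then a n else 0)"
      unfolding a_def by (rule sums_summable)
    moreover have "(cs k (sq n) \<in> {cs k (sq n) | n. a n < 0}) = (a n < 0)" for n using inj_css by blast
    ultimately show ?thesis by simp
  qed
  have "(\<lambda>n. \<bar>a n\<bar>) = (\<lambda>n. (if 0 < a n then a n else 0) - (if a n < 0 then a n else 0))"
    by (auto simp: fun_eq_iff)
  then have "summable (\<lambda>n. \<bar>a n\<bar>)" using summable_diff[OF s1 s2] by simp
  then show ?thesis by (simp add: ell1_def a_def)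
qed

definition mk :: "(nat \<Rightarrow> real) \<Rightarrow> (((nat \<Rightarrow> real) \<Rightarrow> real) set \<Rightarrow> real)" where
  "mk a = (\<lambda>A. if A \<subseteq> PP 0 then
     suminf (\<lambda>n. max (a n) 0 * indicator {n. cs 0 (sq n) \<in> A} n)
     - suminf (\<lambda>n. max (- a n) 0 * indicator {n. cs 0 (sq n) \<in> A} n) else 0)"

lemma mk_FSM:
  assumes a: "a \<in> ell1"
  shows "FSM 0 (mk a)" and "\<And>k. mk a {cs 0 (sq k)} = a k"
proof -
  have sa: "summable (\<lambda>n. \<bar>a n\<bar>)" using a by (simp add: ell1_def)
  have sp: "summable (\<lambda>n. max (a n) 0)" by (rule summable_comparison_test[OF _ sa]) auto
  have sn: "summable (\<lambda>n. max (- a n) 0)" by (rule summable_comparison_test[OF _ sa]) auto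
  have p0: "\<And>n. 0 \<le> max (a n) 0" and n0: "\<And>n. 0 \<le> max (- a n) 0" by auto
  show "FSM 0 (mk a)"
    unfolding finite_signed_borel_measure_def
  proof (intro conjI allI impI)
    show "mk a {} = 0" by (simp add: mk_def)
    show "mk a A = 0" if "A \<notin> borel_sets_of (TT 0)" for A
      using that by (simp add: mk_def borelT)
    fix A :: "nat \<Rightarrow> _"
    assume A: "range A \<subseteq> borel_sets_of (TT 0)" "disjoint_family A"
    define I where "I m = {n. cs 0 (sq n) \<in> A m}" for m
    have dI: "disjoint_family I" using A(2) unfolding disjoint_family_on_def I_def by blast
    have UI: "{n. cs 0 (sq n) \<in> (\<Union>m. A m)} = (\<Union>m. I m)" by (auto simp: I_def)
    have sub: "A m \<subseteq> PP 0" for m using A(1) by (auto simp: borelT)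
    have subU: "(\<Union>m. A m) \<subseteq> PP 0" using sub by blast
    have "(\<lambda>m. suminf (\<lambda>n. max (a n) 0 * indicator (I m) n) - suminf (\<lambda>n. max (- a n) 0 * indicator (I m) n))
       sums (suminf (\<lambda>n. max (a n) 0 * indicator (\<Union>m. I m) n) - suminf (\<lambda>n. max (- a n) 0 * indicator (\<Union>m. I m) n))"
      by (intro sums_diff nonneg_sums[OF p0 sp dI] nonneg_sums[OF n0 sn dI])
    then show "(\<lambda>m. mk a (A m)) sums mk a (\<Union>m. A m)"
      using sub subU UI unfolding mk_def I_def by simp
  qed
  fix k
  have "{n. cs 0 (sq n) \<in> {cs 0 (sq k)}} = {k}" using inj_css by blast
  then show "mk a {cs 0 (sq k)} = a k" using csP[OF sqSS]
    by (simp add: mk_def single_sum)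
qed




abbreviation "XX \<equiv> conv_seq_space"

lemma face_add: "mt_face XX k 0 (\<lambda>A. \<mu> A + \<nu> A) = (\<lambda>A. mt_face XX k 0 \<mu> A + mt_face XX k 0 \<nu> A)"
  by (auto simp: mt_face_def fun_eq_iff)

lemma face_diff: "mt_face XX k 0 (\<lambda>A. \<mu> A - \<nu> A) = (\<lambda>A. mt_face XX k 0 \<mu> A - mt_face XX k 0 \<nu> A)"
  by (auto simp: mt_face_def fun_eq_iff)

lemma face_zero: "mt_face XX k 0 (\<lambda>A. 0) = (\<lambda>A. 0)"
  by (auto simp: mt_face_def fun_eq_iff)

lemma odd_case:
  assumes "odd n" shows "mt_homology XX n = {mt_boundaries XX n}"
proof -
  have n: "1 \<le> n" using assms by (cases n) auto
  have cyc: "mt_cycles XX n = mt_chains XX n"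
    using bdry[OF n] assms by (auto simp: mt_cycles_def)
  have bnd: "mt_boundaries XX n = mt_face XX (Suc n) 0 ` mt_chains XX (Suc n)"
    unfolding mt_boundaries_def using bdry[of "Suc n"] assms by simp
  have cls: "mt_class XX n z = mt_boundaries XX n" if z: "z \<in> mt_chains XX n" for z
  proof
    have zl: "mt_face XX (Suc n) 0 (lift n z) = z" by (rule face_lift[OF z])
    have lc: "lift n z \<in> mt_chains XX (Suc n)" by (rule lift_chain[OF z])
    show "mt_class XX n z \<subseteq> mt_boundaries XX n"
    proof
      fix c assume "c \<in> mt_class XX n z"
      then obtain b where c: "c = (\<lambda>A. z A + b A)" and b: "b \<in> mt_boundaries XX n"
        by (auto simp: mt_class_def)
      obtain \<mu> where mu: "\<mu> \<in> mt_chains XX (Suc n)" "b = mt_face XX (Suc n) 0 \<mu>" using b bnd by auto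
      have "c = mt_face XX (Suc n) 0 (\<lambda>A. lift n z A + \<mu> A)" using c mu zl by (simp add: face_add)
      then show "c \<in> mt_boundaries XX n" using add_chain[OF lc mu(1)] bnd by auto
    qed
    show "mt_boundaries XX n \<subseteq> mt_class XX n z"
    proof
      fix b assume "b \<in> mt_boundaries XX n"
      then obtain \<mu> where mu: "\<mu> \<in> mt_chains XX (Suc n)" "b = mt_face XX (Suc n) 0 \<mu>" using bnd by auto
      define b' where "b' = mt_face XX (Suc n) 0 (\<lambda>A. \<mu> A - lift n z A)"
      have "b' \<in> mt_boundaries XX n" using diff_chain[OF mu(1) lc] bnd b'_def by auto
      moreover have "b = (\<lambda>A. z A + b' A)" using mu zl by (simp add: b'_def face_diff)
      ultimately show "b \<in> mt_class XX n z" by (auto simp: mt_class_def)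
    qed
  qed
  show ?thesis unfolding mt_homology_def cyc using cls zero_chain by blast
qed

lemma even_case:
  assumes "even n" "n > 0" shows "mt_homology XX n = {mt_boundaries XX n}"
proof -
  have n: "1 \<le> n" using assms by simp
  have cyc: "mt_cycles XX n = {(\<lambda>A. 0)}"
  proof
    show "mt_cycles XX n \<subseteq> {(\<lambda>A. 0)}"
    proof
      fix \<mu> assume "\<mu> \<in> mt_cycles XX n"
      then have mu: "\<mu> \<in> mt_chains XX n" "mt_boundary XX n \<mu> = (\<lambda>A. 0)" by (auto simp: mt_cycles_def)
      then have "mt_face XX n 0 \<mu> = (\<lambda>A. 0)" using bdry[OF n] assms(1) by (simp add: fun_eq_iff)
      then show "\<mu> \<in> {(\<lambda>A. 0)}" using face_zero_imp[OF n mu(1)] by simp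
    qed
    show "{(\<lambda>A. 0)} \<subseteq> mt_cycles XX n"
      using zero_chain bdry[OF n] face_zero by (simp add: mt_cycles_def)
  qed
  have "mt_class XX n (\<lambda>A. 0) = mt_boundaries XX n" by (auto simp: mt_class_def)
  then show ?thesis unfolding mt_homology_def cyc by simp
qed

lemma B0: "mt_boundaries XX 0 = {(\<lambda>A. 0)}"
  unfolding mt_boundaries_def using bdry[of 1] zero_chain by auto

lemma class0: "mt_class XX 0 z = {z}"
  by (simp add: mt_class_def B0)

lemma cyc0: "mt_cycles XX 0 = mt_chains XX 0"
  by (simp add: mt_cycles_def mt_boundary_def)

theorem lemma2:
  shows "(\<forall>n > 0. mt_homology conv_seq_space n = {mt_boundaries conv_seq_space n})
    \<and> (\<exists>\<Phi>. bij_betw \<Phi> (mt_homology conv_seq_space 0) ell1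
        \<and> (\<forall>z \<in> mt_cycles conv_seq_space 0. \<forall>w \<in> mt_cycles conv_seq_space 0.
             \<Phi> (mt_class conv_seq_space 0 (\<lambda>A. z A + w A))
               = (\<lambda>k. \<Phi> (mt_class conv_seq_space 0 z) k + \<Phi> (mt_class conv_seq_space 0 w) k))
        \<and> (\<forall>z \<in> mt_cycles conv_seq_space 0. \<forall>r::real.
             \<Phi> (mt_class conv_seq_space 0 (\<lambda>A. r * z A))
               = (\<lambda>k. r * \<Phi> (mt_class conv_seq_space 0 z) k)))"
proof (intro conjI allI impI)
  fix n :: nat assume "n > 0"
  then show "mt_homology XX n = {mt_boundaries XX n}"
    using odd_case even_case by blast
next
  define \<Phi> where "\<Phi> C = (\<lambda>k. the_elem C {cs 0 (sq k)})" for C :: "(((nat \<Rightarrow> real) \<Rightarrow> real) set \<Rightarrow> real) set"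
  have Phi: "\<Phi> (mt_class XX 0 z) = (\<lambda>k. z {cs 0 (sq k)})" for z by (simp add: \<Phi>_def class0)
  have H0: "mt_homology XX 0 = (\<lambda>z. {z}) ` mt_chains XX 0"
    by (simp add: mt_homology_def cyc0 class0[abs_def])
  have "bij_betw \<Phi> (mt_homology XX 0) ell1"
  proof (rule bij_betw_imageI)
    show "inj_on \<Phi> (mt_homology XX 0)"
    proof (rule inj_onI)
      fix C D assume "C \<in> mt_homology XX 0" "D \<in> mt_homology XX 0" "\<Phi> C = \<Phi> D"
      then obtain z w where zw: "C = {z}" "D = {w}" "z \<in> mt_chains XX 0" "w \<in> mt_chains XX 0"
        "\<Phi> {z} = \<Phi> {w}" using H0 by auto
      then have "\<And>n. z {cs 0 (sq n)} = w {cs 0 (sq n)}" by (simp add: \<Phi>_def fun_eq_iff)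
      then have "z = w" using meas_eq zw(3,4) by (auto simp: mt_chains_def)
      then show "C = D" using zw by simp
    qed
    show "\<Phi> ` mt_homology XX 0 = ell1"
    proof
      show "\<Phi> ` mt_homology XX 0 \<subseteq> ell1"
        using meas_ell1 H0 by (auto simp: \<Phi>_def mt_chains_def)
      show "ell1 \<subseteq> \<Phi> ` mt_homology XX 0"
      proof
        fix a assume a: "a \<in> ell1"
        have "mk a \<in> mt_chains XX 0" using chain_carrier mk_FSM(1)[OF a] by blast
        moreover have "\<Phi> {mk a} = a" using mk_FSM(2)[OF a] by (simp add: \<Phi>_def)
        ultimately have "{mk a} \<in> mt_homology XX 0" "a = \<Phi> {mk a}" using H0 by auto
        then show "a \<in> \<Phi> ` mt_homology XX 0" by (rule rev_image_eqI)
      qed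
    qed
  qed
  moreover have "\<forall>z \<in> mt_cycles XX 0. \<forall>w \<in> mt_cycles XX 0.
             \<Phi> (mt_class XX 0 (\<lambda>A. z A + w A))
               = (\<lambda>k. \<Phi> (mt_class XX 0 z) k + \<Phi> (mt_class XX 0 w) k)"
    by (simp add: Phi)
  moreover have "\<forall>z \<in> mt_cycles XX 0. \<forall>r::real.
             \<Phi> (mt_class XX 0 (\<lambda>A. r * z A))
               = (\<lambda>k. r * \<Phi> (mt_class XX 0 z) k)"
    by (simp add: Phi)
  ultimately show "\<exists>\<Phi>. bij_betw \<Phi> (mt_homology XX 0) ell1
        \<and> (\<forall>z \<in> mt_cycles XX 0. \<forall>w \<in> mt_cycles XX 0.
             \<Phi> (mt_class XX 0 (\<lambda>A. z A + w A))
               = (\<lambda>k. \<Phi> (mt_class XX 0 z) k + \<Phi> (mt_class XX 0 w) k))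
        \<and> (\<forall>z \<in> mt_cycles XX 0. \<forall>r::real.
             \<Phi> (mt_class XX 0 (\<lambda>A. r * z A))
               = (\<lambda>k. r * \<Phi> (mt_class XX 0 z) k))" by blast
qed


end
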